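(* Let $V$ be a real vector space with inner products $\langle\cdot,\cdot\rangle_1,\langle\cdot,\cdot\rangle_2$ and induced norms $\|\cdot\|_1,\|\cdot\|_2$. The following are equivalent: (1) there is $c>0$ with $\langle\cdot,\cdot\rangle_2=c\langle\cdot,\cdot\rangle_1$; (2) there is $c>0$ with $\|\cdot\|_2=c\|\cdot\|_1$; (3) for all nonzero $x,y\in V$, the angle between $x$ and $y$ with respect to $\langle\cdot,\cdot\rangle_1$ equals that with respect to $\langle\cdot,\cdot\rangle_2$; (4) for all nonzero $x,y\in V$, $\langle x,y\rangle_1=0$ if and only if $\langle x,y\rangle_2=0$; (5) there exists $\theta_0\in(0,\pi)$ such that for all nonzero $x,y\in V$, the angle between $x$ and $y$ with respect to $\langle\cdot,\cdot\rangle_1$ is $\theta_0$ if and only if the angle between them with respect to $\langle\cdot,\cdot\rangle_2$ is $\theta_0$.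
   Context: For an inner product $\langle\cdot,\cdot\rangle$ on a real vector space with norm $\|x\|=\sqrt{\langle x,x\rangle}$, the angle between nonzero vectors $x,y$ is the unique $\theta\in[0,\pi]$ with $\cos\theta=\langle x,y\rangle/(\|x\|\|y\|)$. *)

theory Defs
  imports Complex_Main
begin

definition is_inner_product :: "('a::real_vector \<Rightarrow> 'a \<Rightarrow> real) \<Rightarrow> bool" where
  "is_inner_product B \<longleftrightarrow>
     (\<forall>x y. B x y = B y x) \<and>
     (\<forall>x y z. B (x + y) z = B x z + B y z) \<and>
     (\<forall>r x y. B (r *\<^sub>R x) y = r * B x y) \<and>
     (\<forall>x. x \<noteq> 0 \<longrightarrow> B x x > 0)"

definition ip_norm :: "('a \<Rightarrow> 'a \<Rightarrow> real) \<Rightarrow> 'a \<Rightarrow> real" where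
  "ip_norm B x = sqrt (B x x)"

definition ip_angle :: "('a \<Rightarrow> 'a \<Rightarrow> real) \<Rightarrow> 'a \<Rightarrow> 'a \<Rightarrow> real" where
  "ip_angle B x y = arccos (B x y / (ip_norm B x * ip_norm B y))"

end

theory Submission
  imports Defs
begin

lemma ipD:
  assumes "is_inner_product B"
  shows ip_sym: "B x y = B y x"
    and ip_addL: "B (x + y) z = B x z + B y z"
    and ip_scaleL: "B (r *\<^sub>R x) y = r * B x y"
    and ip_pos: "x \<noteq> 0 \<Longrightarrow> B x x > 0"
  using assms unfolding is_inner_product_def by auto

lemma ip_addR: "is_inner_product B \<Longrightarrow> B z (x + y) = B z x + B z y"
  by (metis ip_sym ip_addL)

lemma ip_scaleR: "is_inner_product B \<Longrightarrow> B y (r *\<^sub>R x) = r * B y x"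
  by (metis ip_sym ip_scaleL)

lemma ip_zeroL: "is_inner_product B \<Longrightarrow> B 0 y = 0"
  by (metis ip_scaleL mult_zero_left scaleR_zero_left)

lemma ip_zeroR: "is_inner_product B \<Longrightarrow> B y 0 = 0"
  by (metis ip_sym ip_zeroL)

lemma ip_nonneg: "is_inner_product B \<Longrightarrow> B x x \<ge> 0"
  by (metis ip_pos ip_zeroL order.strict_implies_order order_refl)

lemma ip_comb:
  assumes "is_inner_product B"
  shows "B (a *\<^sub>R x + b *\<^sub>R y) (c *\<^sub>R x + d *\<^sub>R y)
      = a*c*B x x + a*d*B x y + b*c*B x y + b*d*B y y"
proof -
  have s: "B y x = B x y" using ip_sym[OF assms] by metis
  show ?thesis
    by (simp add: ip_addL[OF assms] ip_addR[OF assms] ip_scaleL[OF assms] ip_scaleR[OF assms] s algebra_simps)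
qed

lemma ip_CS:
  assumes "is_inner_product B"
  shows "(B x y)^2 \<le> B x x * B y y"
proof (cases "y = 0")
  case True then show ?thesis using ip_zeroR[OF assms] ip_zeroL[OF assms] by simp
next
  case False
  hence p: "B y y > 0" using ip_pos[OF assms] by blast
  define t where "t = B x y / B y y"
  have "0 \<le> B (1 *\<^sub>R x + (-t) *\<^sub>R y) (1 *\<^sub>R x + (-t) *\<^sub>R y)"
    using ip_nonneg[OF assms] by blast
  also have "\<dots> = B x x - 2*t*B x y + t^2 * B y y"
    unfolding ip_comb[OF assms] by (simp add: power2_eq_square)
  also have "\<dots> = B x x - (B x y)^2 / B y y"
    using p unfolding t_def by (simp add: field_simps power2_eq_square)
  finally have "(B x y)^2 / B y y \<le> B x x" by simp
  thus ?thesis using p by (simp add: field_simps)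
qed

lemma ip_cos_bound:
  assumes "is_inner_product B"
  shows "\<bar>B x y / (ip_norm B x * ip_norm B y)\<bar> \<le> 1"
proof -
  have "\<bar>B x y\<bar> = sqrt ((B x y)^2)" by simp
  also have "\<dots> \<le> sqrt (B x x * B y y)" using ip_CS[OF assms] real_sqrt_le_mono by blast
  also have "\<dots> = ip_norm B x * ip_norm B y" unfolding ip_norm_def by (simp add: real_sqrt_mult)
  finally have h: "\<bar>B x y\<bar> \<le> ip_norm B x * ip_norm B y" .
  show ?thesis
  proof (cases "ip_norm B x * ip_norm B y = 0")
    case True then show ?thesis by (simp only: True div_by_0)
  next
    case False
    have "ip_norm B x * ip_norm B y \<ge> 0" unfolding ip_norm_def using ip_nonneg[OF assms, of x] ip_nonneg[OF assms, of y] by simp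
    with False have "ip_norm B x * ip_norm B y > 0" by linarith
    hence "\<bar>B x y / (ip_norm B x * ip_norm B y)\<bar> = \<bar>B x y\<bar> / (ip_norm B x * ip_norm B y)"
      by (metis abs_divide abs_of_pos)
    also have "\<dots> \<le> 1" using h divide_le_eq_1_pos[OF \<open>ip_norm B x * ip_norm B y > 0\<close>] by blast
    finally show ?thesis .
  qed
qed

lemma P4_imp_P1:
  assumes i1: "is_inner_product B1" and i2: "is_inner_product B2"
    and h: "\<forall>x y. x \<noteq> 0 \<longrightarrow> y \<noteq> 0 \<longrightarrow> (B1 x y = 0 \<longleftrightarrow> B2 x y = 0)"
  shows "\<exists>c>0. \<forall>x y. B2 x y = c * B1 x y"
proof -
  define l where "l x = B2 x x / B1 x x" for x
  have c1: "B2 x y = l x * B1 x y" if x: "x \<noteq> 0" for x y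
  proof -
    have p: "B1 x x > 0" using ip_pos[OF i1 x] .
    define k where "k = B1 x y / B1 x x"
    define z where "z = 1 *\<^sub>R y + (-k) *\<^sub>R x"
    have "B1 x z = B1 x y - k * B1 x x" unfolding z_def ip_addR[OF i1] ip_scaleR[OF i1]
      by simp
    hence "B1 x z = 0" using p unfolding k_def by simp
    hence "B2 x z = 0" using h x ip_zeroR[OF i2] by metis
    moreover have "B2 x z = B2 x y - k * B2 x x" unfolding z_def ip_addR[OF i2] ip_scaleR[OF i2]
      by simp
    ultimately show ?thesis using p unfolding k_def l_def by (simp add: field_simps)
  qed
  have c2a: "l x = l y" if "x \<noteq> 0" "y \<noteq> 0" "B1 x y \<noteq> 0" for x y
  proof -
    have "l x * B1 x y = l y * B1 x y"
      using c1[OF that(1), of y] c1[OF that(2), of x] ip_sym[OF i1, of x y] ip_sym[OF i2, of x y]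
      by metis
    thus ?thesis using that(3) by simp
  qed
  have c2: "l x = l y" if x: "x \<noteq> 0" and y: "y \<noteq> 0" for x y
  proof (cases "B1 x y = 0")
    case False then show ?thesis using c2a x y by blast
  next
    case True
    have px: "B1 x x > 0" using ip_pos[OF i1 x] .
    have py: "B1 y y > 0" using ip_pos[OF i1 y] .
    have e1: "B1 x (x + y) = B1 x x" using True by (simp add: ip_addR[OF i1])
    have e2: "B1 y (x + y) = B1 y y" using True ip_sym[OF i1, of x y] by (simp add: ip_addR[OF i1])
    have xy: "x + y \<noteq> 0" using e1 px ip_zeroR[OF i1] by force
    show ?thesis using c2a[OF x xy] c2a[OF y xy] e1 e2 px py by simp
  qed
  show ?thesis
  proof (cases "\<exists>x0::'a. x0 \<noteq> 0")
    case True
    then obtain x0 :: 'a where x0: "x0 \<noteq> 0" by blast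
    have "l x0 > 0" unfolding l_def using ip_pos[OF i1 x0] ip_pos[OF i2 x0] by simp
    moreover have "\<forall>x y. B2 x y = l x0 * B1 x y"
    proof (intro allI)
      fix x y :: 'a
      show "B2 x y = l x0 * B1 x y"
      proof (cases "x = 0")
        case True then show ?thesis using ip_zeroL[OF i1] ip_zeroL[OF i2] by simp
      next
        case False then show ?thesis using c1 c2[OF False x0] by simp
      qed
    qed
    ultimately show ?thesis by blast
  next
    case False
    have "\<forall>x y. B2 x y = 1 * B1 x y"
    proof (intro allI)
      fix x y :: 'a
      have "x = 0" using False by blast
      thus "B2 x y = 1 * B1 x y" using ip_zeroL[OF i1] ip_zeroL[OF i2] by simp
    qed
    thus ?thesis by (intro exI[of _ 1]) simp
  qed
qed


lemma orth_core:
  assumes i1: "is_inner_product B1" and i2: "is_inner_product B2"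
    and th: "0 < \<theta>" "\<theta> < pi"
    and hyp: "\<forall>u v. u \<noteq> 0 \<longrightarrow> v \<noteq> 0 \<longrightarrow> ip_angle B1 u v = \<theta> \<longrightarrow> ip_angle B2 u v = \<theta>"
    and xx: "B1 x x = 1" and yy: "B1 y y = 1" and xy: "B1 x y = 0"
  shows "B2 x y = 0"
proof (rule ccontr)
  assume bnz: "B2 x y \<noteq> 0"
  define A where "A = B2 x x"
  define D where "D = B2 y y"
  define b where "b = B2 x y"
  have yx2: "B2 y x = b" unfolding b_def using ip_sym[OF i2] by metis
  have yx1: "B1 y x = 0" using xy ip_sym[OF i1] by metis
  define r where "r = sqrt ((A-D)^2 + 4*b^2)"
  have rpos: "r > 0" unfolding r_def using bnz b_def by (simp add: add_nonneg_pos)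
  have "((A-D)/r)^2 + (2*b/r)^2 = 1"
  proof -
    have "r^2 = (A-D)^2 + 4*b^2" unfolding r_def by simp
    thus ?thesis using rpos by (simp add: field_simps power2_eq_square)
  qed
  then obtain \<psi> where cpsi: "(A-D)/r = cos \<psi>" and spsi: "2*b/r = sin \<psi>"
    using sincos_total_2pi by metis
  define cp where "cp = cos (\<psi>/2)"
  define sp where "sp = sin (\<psi>/2)"
  have cp2: "cp^2 + sp^2 = 1" unfolding cp_def sp_def by simp
  have cpsi2: "cos \<psi> = cp^2 - sp^2" unfolding cp_def sp_def using cos_double[of "\<psi>/2"] by simp
  have spsi2: "sin \<psi> = 2*sp*cp" unfolding cp_def sp_def using sin_double[of "\<psi>/2"] by simp
  have key0: "cos \<psi> * (2*b) - sin \<psi> * (A-D) = 0"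
    unfolding cpsi[symmetric] spsi[symmetric] by (simp add: field_simps)
  have key: "(cp^2 - sp^2)*(2*b) - (2*sp*cp)*(A-D) = 0" using key0 cpsi2 spsi2 by simp
  define e1 where "e1 = cp *\<^sub>R x + sp *\<^sub>R y"
  define e2 where "e2 = (-sp) *\<^sub>R x + cp *\<^sub>R y"
  have B1e11: "B1 e1 e1 = 1" unfolding e1_def ip_comb[OF i1] xx yy xy using cp2
    by (simp add: power2_eq_square)
  have B1e22: "B1 e2 e2 = 1" unfolding e2_def ip_comb[OF i1] xx yy xy using cp2
    by (simp add: power2_eq_square)
  have B1e12: "B1 e1 e2 = 0" unfolding e1_def e2_def ip_comb[OF i1] xx yy xy
    by (simp add: algebra_simps)
  have B1e21: "B1 e2 e1 = 0" using B1e12 ip_sym[OF i1] by metis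
  define a where "a = B2 e1 e1"
  define d where "d = B2 e2 e2"
  have aeq: "a = cp*cp*A + 2*cp*sp*b + sp*sp*D" unfolding a_def e1_def ip_comb[OF i2]
    A_def[symmetric] D_def[symmetric] b_def[symmetric] by (simp add: algebra_simps)
  have deq: "d = sp*sp*A - 2*cp*sp*b + cp*cp*D" unfolding d_def e2_def ip_comb[OF i2]
    A_def[symmetric] D_def[symmetric] b_def[symmetric] by (simp add: algebra_simps)
  have B2e12: "B2 e1 e2 = 0"
  proof -
    have "B2 e1 e2 = -cp*sp*A + (cp*cp - sp*sp)*b + sp*cp*D" unfolding e1_def e2_def ip_comb[OF i2]
      A_def[symmetric] D_def[symmetric] b_def[symmetric] by (simp add: algebra_simps)
    also have "\<dots> = ((cp^2 - sp^2)*(2*b) - (2*sp*cp)*(A-D)) / 2"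
      by (simp add: algebra_simps power2_eq_square)
    finally show ?thesis using key by simp
  qed
  have B2e21: "B2 e2 e1 = 0" using B2e12 ip_sym[OF i2] by metis
  define c where "c = cos (\<theta>/2)"
  define s where "s = sin (\<theta>/2)"
  have cpos: "c > 0" unfolding c_def using th by (intro cos_gt_zero_pi) auto
  have spos: "s > 0" unfolding s_def using th by (intro sin_gt_zero) auto
  have cs2: "c^2 + s^2 = 1" unfolding c_def s_def by simp
  have cth: "cos \<theta> = c^2 - s^2" unfolding c_def s_def using cos_double[of "\<theta>/2"] by simp
  define u where "u = c *\<^sub>R e1 + (-s) *\<^sub>R e2"
  define v where "v = c *\<^sub>R e1 + s *\<^sub>R e2"
  have B1uu: "B1 u u = 1" unfolding u_def ip_comb[OF i1] B1e11 B1e22 B1e12 using cs2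
    by (simp add: power2_eq_square)
  have B1vv: "B1 v v = 1" unfolding v_def ip_comb[OF i1] B1e11 B1e22 B1e12 using cs2
    by (simp add: power2_eq_square)
  have B1uv: "B1 u v = cos \<theta>" unfolding u_def v_def ip_comb[OF i1] B1e11 B1e22 B1e12 cth
    by (simp add: power2_eq_square)
  have unz: "u \<noteq> 0" using B1uu ip_zeroL[OF i1] by force
  have vnz: "v \<noteq> 0" using B1vv ip_zeroL[OF i1] by force
  have "ip_angle B1 u v = \<theta>" unfolding ip_angle_def ip_norm_def B1uu B1vv B1uv
    using th by (simp add: arccos_cos)
  hence ang2: "ip_angle B2 u v = \<theta>" using hyp unz vnz by blast
  define w where "w = B2 u v / (ip_norm B2 u * ip_norm B2 v)"
  have wb: "\<bar>w\<bar> \<le> 1" unfolding w_def using ip_cos_bound[OF i2] .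
  have "cos (arccos w) = w" using wb by (intro cos_arccos) auto
  hence wc: "w = cos \<theta>" using ang2 unfolding ip_angle_def w_def by simp
  define Q where "Q = c^2*a + s^2*d"
  have B2uu: "B2 u u = Q" unfolding Q_def u_def ip_comb[OF i2] B2e12 a_def[symmetric] d_def[symmetric]
    by (simp add: power2_eq_square)
  have B2vv: "B2 v v = Q" unfolding Q_def v_def ip_comb[OF i2] B2e12 a_def[symmetric] d_def[symmetric]
    by (simp add: power2_eq_square)
  have B2uv: "B2 u v = c^2*a - s^2*d" unfolding v_def u_def ip_comb[OF i2] B2e12 a_def[symmetric] d_def[symmetric]
    by (simp add: power2_eq_square)
  have Qpos: "Q > 0" using ip_pos[OF i2 unz] B2uu by simp
  have "ip_norm B2 u * ip_norm B2 v = Q" unfolding ip_norm_def B2uu B2vv using Qpos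
    by (simp add: real_sqrt_mult[symmetric])
  hence "c^2*a - s^2*d = (c^2 - s^2) * Q" using wc Qpos unfolding w_def B2uv cth
    by (simp add: field_simps)
  moreover have "(c^2*a - s^2*d) - (c^2 - s^2) * (c^2*a + s^2*d) = 2*c^2*s^2*(a - d) + (1 - (c^2 + s^2))*(c^2*a - s^2*d)"
    by (simp add: algebra_simps power2_eq_square)
  ultimately have "2*c^2*s^2*(a - d) = 0" unfolding Q_def using cs2 by simp
  hence ad: "a = d" using cpos spos by simp
  define C where "C = cp^2 - sp^2"
  define S where "S = 2*sp*cp"
  have CS: "C^2 + S^2 = 1"
  proof -
    have "C^2 + S^2 = (cp^2+sp^2)^2" unfolding C_def S_def by (simp add: algebra_simps power2_eq_square)
    thus ?thesis using cp2 by simp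
  qed
  have e1': "C*(A-D) + 2*S*b = 0" using ad aeq deq unfolding C_def S_def
    by (simp add: algebra_simps power2_eq_square)
  have e2': "2*C*b - S*(A-D) = 0" using key unfolding C_def S_def by (simp add: algebra_simps)
  have "C*(2*C*b - S*(A-D)) + S*(C*(A-D) + 2*S*b) = 2*b*(C^2+S^2)"
    by (simp add: algebra_simps power2_eq_square)
  hence "b = 0" using e1' e2' CS by simp
  thus False using bnz b_def by simp
qed


lemma orth_gen:
  assumes i1: "is_inner_product B1" and i2: "is_inner_product B2"
    and th: "0 < \<theta>" "\<theta> < pi"
    and hyp: "\<forall>u v. u \<noteq> 0 \<longrightarrow> v \<noteq> 0 \<longrightarrow> ip_angle B1 u v = \<theta> \<longrightarrow> ip_angle B2 u v = \<theta>"
    and x: "x \<noteq> 0" and y: "y \<noteq> 0" and xy: "B1 x y = 0"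
  shows "B2 x y = 0"
proof -
  define nx where "nx = sqrt (B1 x x)"
  define ny where "ny = sqrt (B1 y y)"
  have px: "B1 x x > 0" using ip_pos[OF i1 x] .
  have py: "B1 y y > 0" using ip_pos[OF i1 y] .
  have nxp: "nx > 0" unfolding nx_def using px by simp
  have nyp: "ny > 0" unfolding ny_def using py by simp
  have nx2: "nx * nx = B1 x x" unfolding nx_def using px by simp
  have ny2: "ny * ny = B1 y y" unfolding ny_def using py by simp
  define x1 where "x1 = (1/nx) *\<^sub>R x"
  define y1 where "y1 = (1/ny) *\<^sub>R y"
  have "B1 x1 x1 = B1 x x / (nx*nx)" unfolding x1_def ip_scaleL[OF i1] ip_scaleR[OF i1] by simp
  hence a1: "B1 x1 x1 = 1" using nx2 px by simp
  have "B1 y1 y1 = B1 y y / (ny*ny)" unfolding y1_def ip_scaleL[OF i1] ip_scaleR[OF i1] by simp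
  hence a2: "B1 y1 y1 = 1" using ny2 py by simp
  have a3: "B1 x1 y1 = 0" unfolding x1_def y1_def ip_scaleL[OF i1] ip_scaleR[OF i1] xy by simp
  have "B2 x1 y1 = 0" using orth_core[OF i1 i2 th hyp a1 a2 a3] .
  moreover have "B2 x1 y1 = B2 x y / (nx * ny)" unfolding x1_def y1_def ip_scaleL[OF i2] ip_scaleR[OF i2] by simp
  ultimately show ?thesis using nxp nyp by simp
qed

lemma norm_scale:
  assumes i1: "is_inner_product B1" and c: "c > 0" and h: "\<forall>x y. B2 x y = c * B1 x y"
  shows "ip_norm B2 x = sqrt c * ip_norm B1 x"
  unfolding ip_norm_def using h by (simp add: real_sqrt_mult)

theorem mainTheorem6:
  fixes B1 B2 :: "'a::real_vector \<Rightarrow> 'a \<Rightarrow> real"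
  assumes "is_inner_product B1" and "is_inner_product B2"
  defines "P1 \<equiv> (\<exists>c>0. \<forall>x y. B2 x y = c * B1 x y)"
      and "P2 \<equiv> (\<exists>c>0. \<forall>x. ip_norm B2 x = c * ip_norm B1 x)"
      and "P3 \<equiv> (\<forall>x y. x \<noteq> 0 \<longrightarrow> y \<noteq> 0 \<longrightarrow> ip_angle B1 x y = ip_angle B2 x y)"
      and "P4 \<equiv> (\<forall>x y. x \<noteq> 0 \<longrightarrow> y \<noteq> 0 \<longrightarrow> (B1 x y = 0 \<longleftrightarrow> B2 x y = 0))"
      and "P5 \<equiv> (\<exists>\<theta>0. 0 < \<theta>0 \<and> \<theta>0 < pi \<and>
                 (\<forall>x y. x \<noteq> 0 \<longrightarrow> y \<noteq> 0 \<longrightarrow> (ip_angle B1 x y = \<theta>0 \<longleftrightarrow> ip_angle B2 x y = \<theta>0)))"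
  shows "(P1 \<longleftrightarrow> P2) \<and> (P2 \<longleftrightarrow> P3) \<and> (P3 \<longleftrightarrow> P4) \<and> (P4 \<longleftrightarrow> P5)"
proof -
  note i1 = assms(1) and i2 = assms(2)
  have 12: "P1 \<Longrightarrow> P2"
  proof -
    assume P1
    then obtain c where c: "c > 0" "\<forall>x y. B2 x y = c * B1 x y" unfolding P1_def by blast
    have "sqrt c > 0" using c(1) by simp
    thus P2 unfolding P2_def using norm_scale[OF i1 c] by blast
  qed
  have 21: "P2 \<Longrightarrow> P1"
  proof -
    assume P2
    then obtain c where c: "c > 0" "\<forall>x. ip_norm B2 x = c * ip_norm B1 x" unfolding P2_def by blast
    have sq: "B2 x x = c^2 * B1 x x" for x
    proof -
      have "sqrt (B2 x x) = c * sqrt (B1 x x)" using c(2) unfolding ip_norm_def by blast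
      hence "(sqrt (B2 x x))^2 = c^2 * (sqrt (B1 x x))^2" by (simp add: power_mult_distrib)
      thus ?thesis using ip_nonneg[OF i1, of x] ip_nonneg[OF i2, of x] by simp
    qed
    have "B2 x y = c^2 * B1 x y" for x y
    proof -
      have e1: "B1 (x + y) (x + y) = B1 x x + 2 * B1 x y + B1 y y"
        using ip_comb[OF i1, of 1 x 1 y 1 1] by simp
      have e2: "B2 (x + y) (x + y) = B2 x x + 2 * B2 x y + B2 y y"
        using ip_comb[OF i2, of 1 x 1 y 1 1] by simp
      have e3: "c^2 * (B1 x x + 2 * B1 x y + B1 y y) = c^2 * B1 x x + 2 * (c^2 * B1 x y) + c^2 * B1 y y"
        by (simp add: algebra_simps)
      have e4: "B2 (x + y) (x + y) = c^2 * (B1 x x + 2 * B1 x y + B1 y y)"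
        using sq[of "x + y"] e1 by simp
      show ?thesis using e2 e3 e4 sq[of x] sq[of y] by linarith
    qed
    thus P1 unfolding P1_def using c(1) by (intro exI[of _ "c^2"]) simp
  qed
  have 13: "P1 \<Longrightarrow> P3"
  proof -
    assume P1
    then obtain c where c: "c > 0" "\<forall>x y. B2 x y = c * B1 x y" unfolding P1_def by blast
    have n: "ip_norm B2 x = sqrt c * ip_norm B1 x" for x using norm_scale[OF i1 c] .
    have sc: "sqrt c * sqrt c = c" using c(1) by simp
    have "B2 x y / (ip_norm B2 x * ip_norm B2 y) = B1 x y / (ip_norm B1 x * ip_norm B1 y)" for x y
    proof -
      have nn: "ip_norm B2 x * ip_norm B2 y = (sqrt c * sqrt c) * (ip_norm B1 x * ip_norm B1 y)"
        using n[of x] n[of y] by (simp only: mult_ac)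
      have "B2 x y / (ip_norm B2 x * ip_norm B2 y) = (c * B1 x y) / (c * (ip_norm B1 x * ip_norm B1 y))"
        using c(2) nn sc by simp
      thus ?thesis using c(1) by simp
    qed
    thus P3 unfolding P3_def ip_angle_def by simp
  qed
  have 35: "P3 \<Longrightarrow> P5"
  proof -
    assume P3
    thus P5 unfolding P5_def P3_def by (intro exI[of _ "pi/2"]) auto
  qed
  have 54: "P5 \<Longrightarrow> P4"
  proof -
    assume P5
    then obtain \<theta> where th: "0 < \<theta>" "\<theta> < pi"
      and h: "\<forall>x y. x \<noteq> 0 \<longrightarrow> y \<noteq> 0 \<longrightarrow> (ip_angle B1 x y = \<theta> \<longleftrightarrow> ip_angle B2 x y = \<theta>)"
      unfolding P5_def by blast
    have h1: "\<forall>u v. u \<noteq> 0 \<longrightarrow> v \<noteq> 0 \<longrightarrow> ip_angle B1 u v = \<theta> \<longrightarrow> ip_angle B2 u v = \<theta>" using h by blast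
    have h2: "\<forall>u v. u \<noteq> 0 \<longrightarrow> v \<noteq> 0 \<longrightarrow> ip_angle B2 u v = \<theta> \<longrightarrow> ip_angle B1 u v = \<theta>" using h by blast
    show P4 unfolding P4_def
      using orth_gen[OF i1 i2 th h1] orth_gen[OF i2 i1 th h2] by blast
  qed
  have 41: "P4 \<Longrightarrow> P1" unfolding P4_def P1_def using P4_imp_P1[OF i1 i2] by blast
  show ?thesis using 12 21 13 35 54 41 by blast
qed

end
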